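(* Let $n\in\mathbb{N}$, $\hbar\in{]0,\infty[}$, $\mu\in\mathbb{R}$, $k,\ell\in\mathbb{N}_0$ and $g\in\mathscr{P}^{\ell,\ell}(\mathbb{C}^{1+n})$. Then $\mathcal{J}^kg-\hbar^k\big(\tfrac{\mu}{\hbar}-\ell\big)_{\downarrow,k}\,g\in\langle\mathcal{J}-\mu\rangle$, where $\mathcal{J}^kg$ is the pointwise product and $\langle\mathcal{J}-\mu\rangle$ is the $^*$-ideal of $(\bigoplus_m\mathscr{P}^{m,m}(\mathbb{C}^{1+n}),\star_\hbar)$ generated by $\mathcal{J}-\mu\mathbb{1}$.
   Context: $\mathscr{P}^{k,\ell}(\mathbb{C}^{1+n})$ is the span of monomials $z^K\overline{z}^L$ with $K,L\in\mathbb{N}_0^{1+n}$, $|K|=k$, $|L|=\ell$. Wick product: $f\star_\hbar g=\sum_{K}\frac{\hbar^{|K|}}{K!}\frac{\partial^{|K|}f}{\partial\overline{z}^K}\frac{\partial^{|K|}g}{\partial z^K}$ ($K!=\prod K_i!$), involution pointwise complex conjugation. $\mathcal{J}=\sum_{j=0}^nz_j\overline{z_j}$. Falling factorial: $(x)_{\downarrow,k}=\prod_{j=0}^{k-1}(x-j)$. *)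

theory Defs
  imports "HOL-Analysis.Analysis" "HOL-Library.Poly_Mapping"
begin

text \<open>Polynomials in z_0..z_n and their conjugates: a polynomial is the finitely
 supported map sending (K,L) to the coefficient of z^K zbar^L.\<close>

type_synonym mexp = "nat \<Rightarrow>\<^sub>0 nat"
type_synonym cpoly = "(mexp \<times> mexp) \<Rightarrow>\<^sub>0 complex"

definition ffall :: "'a::comm_ring_1 \<Rightarrow> nat \<Rightarrow> 'a" where
  "ffall x k = (\<Prod>j<k. x - of_nat j)"

definition mdeg :: "mexp \<Rightarrow> nat" where
  "mdeg K = (\<Sum>i\<in>Poly_Mapping.keys K. Poly_Mapping.lookup K i)"

definition mfact :: "mexp \<Rightarrow> nat" where
  "mfact K = (\<Prod>i\<in>Poly_Mapping.keys K. fact (Poly_Mapping.lookup K i))"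

text \<open>coefficient of d^K/dx^K applied to x^B (then times x^(B-K)); zero unless K \<le> B\<close>
definition dcoef :: "mexp \<Rightarrow> mexp \<Rightarrow> complex" where
  "dcoef K B = (\<Prod>i\<in>Poly_Mapping.keys K.
                  ffall (of_nat (Poly_Mapping.lookup B i)) (Poly_Mapping.lookup K i))"

definition pscale :: "complex \<Rightarrow> cpoly \<Rightarrow> cpoly" where
  "pscale c p = Poly_Mapping.map (\<lambda>v. c * v) p"

definition dzbar :: "mexp \<Rightarrow> cpoly \<Rightarrow> cpoly" where
  "dzbar K p = (\<Sum>AB\<in>Poly_Mapping.keys p.
     Poly_Mapping.single (fst AB, snd AB - K) (dcoef K (snd AB) * Poly_Mapping.lookup p AB))"

definition dz :: "mexp \<Rightarrow> cpoly \<Rightarrow> cpoly" where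
  "dz K p = (\<Sum>AB\<in>Poly_Mapping.keys p.
     Poly_Mapping.single (fst AB - K, snd AB) (dcoef K (fst AB) * Poly_Mapping.lookup p AB))"

text \<open>Wick product; the product of polynomials (*) is the pointwise product of
 the polynomial functions (convolution of coefficients).\<close>
definition wick :: "real \<Rightarrow> cpoly \<Rightarrow> cpoly \<Rightarrow> cpoly" where
  "wick hb f g = Sum_any (\<lambda>K. pscale (complex_of_real (hb ^ mdeg K) / of_nat (mfact K))
                                   (dzbar K f * dz K g))"

definition pconj :: "cpoly \<Rightarrow> cpoly" where
  "pconj p = (\<Sum>AB\<in>Poly_Mapping.keys p.
     Poly_Mapping.single (snd AB, fst AB) (cnj (Poly_Mapping.lookup p AB)))"

text \<open>polynomials on C^(1+n): only variables 0..n occur\<close>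
definition Pkl :: "nat \<Rightarrow> nat \<Rightarrow> nat \<Rightarrow> cpoly set" where
  "Pkl n k l = {p. \<forall>AB\<in>Poly_Mapping.keys p.
       Poly_Mapping.keys (fst AB) \<subseteq> {..n} \<and> Poly_Mapping.keys (snd AB) \<subseteq> {..n} \<and>
       mdeg (fst AB) = k \<and> mdeg (snd AB) = l}"

text \<open>the algebra: direct sum over m of P^{m,m}\<close>
definition Alg :: "nat \<Rightarrow> cpoly set" where
  "Alg n = {p. \<forall>AB\<in>Poly_Mapping.keys p.
       Poly_Mapping.keys (fst AB) \<subseteq> {..n} \<and> Poly_Mapping.keys (snd AB) \<subseteq> {..n} \<and>
       mdeg (fst AB) = mdeg (snd AB)}"

definition Jpoly :: "nat \<Rightarrow> cpoly" where
  "Jpoly n = (\<Sum>j\<le>n. Poly_Mapping.single (Poly_Mapping.single j 1, Poly_Mapping.single j 1) 1)"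

inductive_set star_ideal :: "nat \<Rightarrow> real \<Rightarrow> cpoly set \<Rightarrow> cpoly set"
  for n :: nat and hb :: real and S :: "cpoly set" where
  gen: "x \<in> S \<Longrightarrow> x \<in> star_ideal n hb S"
| zero: "0 \<in> star_ideal n hb S"
| add: "x \<in> star_ideal n hb S \<Longrightarrow> y \<in> star_ideal n hb S \<Longrightarrow> x + y \<in> star_ideal n hb S"
| scale: "x \<in> star_ideal n hb S \<Longrightarrow> pscale c x \<in> star_ideal n hb S"
| left: "x \<in> star_ideal n hb S \<Longrightarrow> a \<in> Alg n \<Longrightarrow> wick hb a x \<in> star_ideal n hb S"
| right: "x \<in> star_ideal n hb S \<Longrightarrow> a \<in> Alg n \<Longrightarrow> wick hb x a \<in> star_ideal n hb S"
| conj: "x \<in> star_ideal n hb S \<Longrightarrow> pconj x \<in> star_ideal n hb S"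

end

theory Submission
  imports Defs
begin

lemma pscale_eq: "pscale c p = Poly_Mapping.single 0 c * p"
  unfolding pscale_def by (rule mult_map_scale_conv_mult)

definition lin :: "((mexp \<times> mexp) \<Rightarrow> complex \<Rightarrow> cpoly) \<Rightarrow> cpoly \<Rightarrow> cpoly" where
  "lin h p = (\<Sum>AB\<in>Poly_Mapping.keys p. h AB (Poly_Mapping.lookup p AB))"

locale addh =
  fixes h :: "(mexp \<times> mexp) \<Rightarrow> complex \<Rightarrow> cpoly"
  assumes hadd: "\<And>AB a b. h AB (a + b) = h AB a + h AB b"
begin

lemma h0: "h AB 0 = 0"
  using hadd[of AB 0 0] by simp

lemma hdiff: "h AB (a - b) = h AB a - h AB b"
  using hadd[of AB "a - b" b] by (simp add: algebra_simps)

lemma lin_superset: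
  assumes "finite S" "Poly_Mapping.keys p \<subseteq> S"
  shows "lin h p = (\<Sum>AB\<in>S. h AB (Poly_Mapping.lookup p AB))"
  unfolding lin_def
  by (rule sum.mono_neutral_left) (use assms in \<open>auto simp: h0 in_keys_iff\<close>)

lemma lin_add: "lin h (p + q) = lin h p + lin h q"
proof -
  let ?S = "Poly_Mapping.keys p \<union> Poly_Mapping.keys q"
  have k: "Poly_Mapping.keys (p + q) \<subseteq> ?S" by (rule keys_add)
  show ?thesis
    using lin_superset[OF _ k] lin_superset[of ?S p] lin_superset[of ?S q]
    by (simp add: lookup_add hadd sum.distrib)
qed

lemma lin_diff: "lin h (p - q) = lin h p - lin h q"
  using lin_add[of "p - q" q] by (simp add: algebra_simps)

lemma lin_single: "lin h (Poly_Mapping.single AB c) = h AB c"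
  using lin_superset[of "{AB}" "Poly_Mapping.single AB c"] by simp

lemma lin_sum: "lin h (\<Sum>i\<in>I. f i) = (\<Sum>i\<in>I. lin h (f i))"
proof (induction I rule: infinite_finite_induct)
  case (infinite A)
  then show ?case by (simp add: lin_def)
next
  case empty
  then show ?case by (simp add: lin_def)
next
  case (insert x F)
  then show ?case by (simp add: lin_add)
qed

end

lemma addh_single: "addh (\<lambda>AB c. Poly_Mapping.single (\<phi> AB) (d AB * c))"
  by unfold_locales (simp add: distrib_left single_add)

lemma dzbar_lin: "dzbar K = lin (\<lambda>AB c. Poly_Mapping.single (fst AB, snd AB - K) (dcoef K (snd AB) * c))"
  by (simp add: fun_eq_iff dzbar_def lin_def)

lemma dz_lin: "dz K = lin (\<lambda>AB c. Poly_Mapping.single (fst AB - K, snd AB) (dcoef K (fst AB) * c))"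
  by (simp add: fun_eq_iff dz_def lin_def)

lemma sum_single_lookup: "(\<Sum>AB\<in>Poly_Mapping.keys p. Poly_Mapping.single AB (Poly_Mapping.lookup p AB)) = p"
proof (rule poly_mapping_eqI)
  fix k
  show "Poly_Mapping.lookup (\<Sum>AB\<in>Poly_Mapping.keys p. Poly_Mapping.single AB (Poly_Mapping.lookup p AB)) k = Poly_Mapping.lookup p k"
    by (simp add: lookup_sum lookup_single when_def in_keys_iff)
qed

lemma ffall_zero: "b < k \<Longrightarrow> ffall (of_nat b :: complex) k = 0"
  unfolding ffall_def by (rule prod_zero) auto

lemma ffall_Suc: "ffall (x::'a::comm_ring_1) (Suc k) = x * ffall (x - 1) k"
  unfolding ffall_def prod.lessThan_Suc_shift by (simp add: algebra_simps)

lemma dcoef_zero: "Poly_Mapping.lookup B i < Poly_Mapping.lookup K i \<Longrightarrow> dcoef K B = 0"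
  unfolding dcoef_def
  by (rule prod_zero) (auto simp: in_keys_iff intro!: bexI[of _ i] ffall_zero)

lemma dcoef_0: "dcoef 0 B = 1"
  by (simp add: dcoef_def)

lemma dcoef_e: "dcoef (Poly_Mapping.single j 1) B = of_nat (Poly_Mapping.lookup B j)"
  by (simp add: dcoef_def ffall_def)

lemma dzbar_0: "dzbar 0 p = p"
  by (simp add: dzbar_def dcoef_0 sum_single_lookup)

lemma dz_0: "dz 0 p = p"
  by (simp add: dz_def dcoef_0 sum_single_lookup)

abbreviation E :: "nat \<Rightarrow> mexp" where "E j \<equiv> Poly_Mapping.single j 1"

lemma E_eq_iff: "E i = E j \<longleftrightarrow> i = j"
  by (metis lookup_single_eq lookup_single_not_eq one_neq_zero)

lemma E_neq0: "E j \<noteq> 0"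
  by (metis lookup_single_eq lookup_zero one_neq_zero)

lemmas E_eq_iff' [simp] = E_eq_iff[simplified]
lemmas E_neq0' [simp] = E_neq0[simplified]

lemma e_le:
  assumes "K \<noteq> 0" "K \<noteq> E j"
  shows "\<exists>i. Poly_Mapping.lookup (E j) i < Poly_Mapping.lookup K i"
proof (rule ccontr)
  assume "\<not> ?thesis"
  then have le: "\<And>i. Poly_Mapping.lookup K i \<le> Poly_Mapping.lookup (E j) i" by (simp add: not_less)
  have oth: "\<And>i. i \<noteq> j \<Longrightarrow> Poly_Mapping.lookup K i = 0"
    using le by (metis le_zero_eq lookup_single_not_eq)
  have "Poly_Mapping.lookup K j \<le> 1" using le[of j] by simp
  then consider "Poly_Mapping.lookup K j = 0" | "Poly_Mapping.lookup K j = 1" by linarith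
  then show False
  proof cases
    case 1
    then have "K = 0" by (intro poly_mapping_eqI) (metis oth lookup_zero)
    then show False using assms by simp
  next
    case 2
    then have "K = E j" by (intro poly_mapping_eqI) (metis oth lookup_single_eq lookup_single_not_eq)
    then show False using assms by simp
  qed
qed

lemma f_eq: "Jpoly n - pscale (complex_of_real \<mu>) 1 =
   (\<Sum>j\<le>n. Poly_Mapping.single (E j, E j) 1) - Poly_Mapping.single 0 (complex_of_real \<mu>)"
  by (simp add: Jpoly_def pscale_eq)

lemma dzbar_f:
  assumes "K \<noteq> 0"
  shows "dzbar K ((\<Sum>j\<le>n. Poly_Mapping.single (E j, E j) 1) - Poly_Mapping.single 0 m)
     = (\<Sum>j\<le>n. (Poly_Mapping.single (E j, 0) 1 when K = E j))"
proof -
  interpret addh "\<lambda>AB c. Poly_Mapping.single (fst AB, snd AB - K) (dcoef K (snd AB) * c)"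
    by (rule addh_single)
  obtain i where i: "Poly_Mapping.lookup K i \<noteq> 0" using assms by (metis poly_mapping_eqI lookup_zero)
  have z: "dcoef K 0 = 0" by (rule dcoef_zero[of _ i]) (use i in simp)
  have t: "Poly_Mapping.single (E j, E j - K) (dcoef K (E j) * 1) = (Poly_Mapping.single (E j, 0) 1 when K = E j)" for j
  proof (cases "K = E j")
    case True
    then show ?thesis using dcoef_e[of j "E j"] by simp
  next
    case False
    then obtain i where "Poly_Mapping.lookup (E j) i < Poly_Mapping.lookup K i" using e_le assms by blast
    then have "dcoef K (E j) = 0" by (rule dcoef_zero)
    then show ?thesis using False by simp
  qed
  show ?thesis
    unfolding dzbar_lin lin_diff lin_sum lin_single
    using t by (simp add: z zero_prod_def)
qed

lemma mdeg_superset: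
  assumes "finite S" "Poly_Mapping.keys K \<subseteq> S"
  shows "mdeg K = (\<Sum>i\<in>S. Poly_Mapping.lookup K i)"
  unfolding mdeg_def
  by (rule sum.mono_neutral_left) (use assms in \<open>auto simp: in_keys_iff\<close>)

lemma mdeg_add: "mdeg (A + B) = mdeg A + mdeg B"
proof -
  let ?S = "Poly_Mapping.keys A \<union> Poly_Mapping.keys B"
  have k: "Poly_Mapping.keys (A + B) \<subseteq> ?S" by (rule keys_add)
  show ?thesis
    using mdeg_superset[OF _ k] mdeg_superset[of ?S A] mdeg_superset[of ?S B]
    by (simp add: lookup_add sum.distrib)
qed

lemma mdeg_E: "mdeg (E j) = 1"
  by (simp add: mdeg_def)
lemma mfact_E: "mfact (E j) = 1"
  by (simp add: mfact_def)
lemma mdeg_0: "mdeg 0 = 0"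
  by (simp add: mdeg_def)
lemma mfact_0: "mfact 0 = 1"
  by (simp add: mfact_def)

lemma single_sum: "Poly_Mapping.single k (sum f S) = (\<Sum>x\<in>S. Poly_Mapping.single k (f x))"
  by (induction S rule: infinite_finite_induct) (auto simp: single_add)

lemma E_add_minus:
  assumes "Poly_Mapping.lookup A j \<noteq> 0"
  shows "E j + (A - E j) = A"
proof (rule poly_mapping_eqI)
  fix i
  show "Poly_Mapping.lookup (E j + (A - E j)) i = Poly_Mapping.lookup A i"
    using assms by (cases "i = j") (auto simp: lookup_add lookup_minus lookup_single_not_eq)
qed

lemma dzE_g:
  "Poly_Mapping.single (E j, 0) 1 * dz (E j) g =
   (\<Sum>AB\<in>Poly_Mapping.keys g. Poly_Mapping.single AB
       (of_nat (Poly_Mapping.lookup (fst AB) j) * Poly_Mapping.lookup g AB))"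
  unfolding dz_def sum_distrib_left
proof (rule sum.cong[OF refl])
  fix AB :: "mexp \<times> mexp"
  show "Poly_Mapping.single (E j, 0) 1 *
         Poly_Mapping.single (fst AB - E j, snd AB) (dcoef (E j) (fst AB) * Poly_Mapping.lookup g AB) =
        Poly_Mapping.single AB (of_nat (Poly_Mapping.lookup (fst AB) j) * Poly_Mapping.lookup g AB)"
  proof (cases "Poly_Mapping.lookup (fst AB) j = 0")
    case True
    then show ?thesis using dcoef_e[of j "fst AB"] by simp
  next
    case False
    have "(E j, 0) + (fst AB - E j, snd AB) = AB"
      using E_add_minus[OF False] by (cases AB) simp
    then show ?thesis using dcoef_e[of j "fst AB"] by (simp add: mult_single)
  qed
qed

lemma wick_f:
  assumes g: "g \<in> Pkl n l l"
  shows "wick hb (Jpoly n - pscale (complex_of_real \<mu>) 1) g =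
     (Jpoly n - pscale (complex_of_real \<mu>) 1) * g + Poly_Mapping.single 0 (complex_of_real (hb * real l)) * g"
proof -
  define f where "f = Jpoly n - pscale (complex_of_real \<mu>) 1"
  have f: "f = (\<Sum>j\<le>n. Poly_Mapping.single (E j, E j) 1) - Poly_Mapping.single 0 (complex_of_real \<mu>)"
    unfolding f_def by (rule f_eq)
  define T where "T K = pscale (complex_of_real (hb ^ mdeg K) / of_nat (mfact K)) (dzbar K f * dz K g)" for K
  define A where "A = insert 0 (E ` {..n})"
  have dzf: "K \<noteq> 0 \<Longrightarrow> dzbar K f = (\<Sum>j\<le>n. (Poly_Mapping.single (E j, 0) 1 when K = E j))" for K
    unfolding f by (rule dzbar_f)
  have out: "T K = 0" if "K \<notin> A" for K
  proof -
    have "K \<noteq> 0" "\<And>j. j \<le> n \<Longrightarrow> K \<noteq> E j" using that by (auto simp: A_def)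
    then have "dzbar K f = 0" using dzf by simp
    then show ?thesis by (simp add: T_def pscale_eq)
  qed
  have fin: "finite A" by (simp add: A_def)
  have "wick hb f g = Sum_any T" by (simp add: wick_def T_def)
  also have "\<dots> = sum T A"
    by (rule Sum_any.expand_superset[OF fin]) (use out in blast)
  also have "\<dots> = T 0 + sum T (E ` {..n})"
    unfolding A_def by (rule sum.insert) (use E_neq0[simplified] in auto)
  also have "sum T (E ` {..n}) = (\<Sum>j\<le>n. T (E j))"
    by (rule sum.reindex_cong[of E]) (auto simp: inj_on_def E_eq_iff)
  also have "T 0 = f * g" by (simp add: T_def mdeg_0 mfact_0 dzbar_0 dz_0 pscale_eq)
  also have "(\<Sum>j\<le>n. T (E j)) = (\<Sum>j\<le>n. Poly_Mapping.single 0 (complex_of_real hb) *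
      (\<Sum>AB\<in>Poly_Mapping.keys g. Poly_Mapping.single AB
       (of_nat (Poly_Mapping.lookup (fst AB) j) * Poly_Mapping.lookup g AB)))"
  proof (rule sum.cong[OF refl])
    fix j assume j: "j \<in> {..n}"
    have "dzbar (E j) f = Poly_Mapping.single (E j, 0) 1"
      using dzf[OF E_neq0[of j]] j by (simp add: E_eq_iff when_def)
    then show "T (E j) = Poly_Mapping.single 0 (complex_of_real hb) *
      (\<Sum>AB\<in>Poly_Mapping.keys g. Poly_Mapping.single AB
       (of_nat (Poly_Mapping.lookup (fst AB) j) * Poly_Mapping.lookup g AB))"
      unfolding T_def mdeg_E mfact_E pscale_eq dzE_g[symmetric] by simp
  qed
  also have "\<dots> = Poly_Mapping.single 0 (complex_of_real hb) *
      (\<Sum>AB\<in>Poly_Mapping.keys g. Poly_Mapping.single AB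
       ((\<Sum>j\<le>n. of_nat (Poly_Mapping.lookup (fst AB) j)) * Poly_Mapping.lookup g AB))"
    by (simp add: sum_distrib_left[symmetric] sum_distrib_right single_sum sum.swap[of _ "{..n}"])
  also have "\<dots> = Poly_Mapping.single 0 (complex_of_real hb) *
      (\<Sum>AB\<in>Poly_Mapping.keys g. Poly_Mapping.single 0 (of_nat l) * Poly_Mapping.single AB
       (Poly_Mapping.lookup g AB))"
  proof -
    have "(\<Sum>j\<le>n. of_nat (Poly_Mapping.lookup (fst AB) j) :: complex) = of_nat l"
      if "AB \<in> Poly_Mapping.keys g" for AB
    proof -
      have "Poly_Mapping.keys (fst AB) \<subseteq> {..n}" "mdeg (fst AB) = l"
        using g that by (auto simp: Pkl_def)
      then show ?thesis using mdeg_superset[of "{..n}" "fst AB"] by (simp flip: of_nat_sum)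
    qed
    then show ?thesis by (intro arg_cong2[where f="(*)"] refl sum.cong) (auto simp: mult_single simp del: single_of_nat)
  qed
  also have "\<dots> = Poly_Mapping.single 0 (complex_of_real (hb * real l)) * g"
  proof -
    have "(\<Sum>AB\<in>Poly_Mapping.keys g. Poly_Mapping.single 0 (of_nat l) * Poly_Mapping.single AB
       (Poly_Mapping.lookup g AB)) = Poly_Mapping.single 0 (of_nat l) * g"
      by (simp only: sum_distrib_left[symmetric] sum_single_lookup)
    then show ?thesis by (simp add: mult.assoc[symmetric] mult_single del: single_of_nat)
  qed
  finally show ?thesis unfolding f_def .
qed

lemma keys_J: "Poly_Mapping.keys (Jpoly n) \<subseteq> (\<lambda>j. (E j, E j)) ` {..n}"
proof -
  have "Poly_Mapping.keys (Jpoly n) \<subseteq> (\<Union>j\<in>{..n}. Poly_Mapping.keys (Poly_Mapping.single (E j, E j) (1::complex)))"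
    unfolding Jpoly_def by (rule keys_sum)
  then show ?thesis by auto
qed

lemma Pkl_J:
  assumes g: "g \<in> Pkl n l l"
  shows "Jpoly n * g \<in> Pkl n (Suc l) (Suc l)"
  unfolding Pkl_def
proof (intro CollectI ballI)
  fix AB assume "AB \<in> Poly_Mapping.keys (Jpoly n * g)"
  then obtain a b where ab: "AB = a + b" "a \<in> Poly_Mapping.keys (Jpoly n)" "b \<in> Poly_Mapping.keys g"
    using keys_mult by blast
  then obtain j where j: "j \<le> n" "a = (E j, E j)" using keys_J by blast
  have b: "Poly_Mapping.keys (fst b) \<subseteq> {..n}" "Poly_Mapping.keys (snd b) \<subseteq> {..n}"
    "mdeg (fst b) = l" "mdeg (snd b) = l" using g ab(3) by (auto simp: Pkl_def)
  have AB: "AB = (E j + fst b, E j + snd b)" using ab j by (cases b) simp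
  have k: "Poly_Mapping.keys (E j + X) \<subseteq> {..n}" if "Poly_Mapping.keys X \<subseteq> {..n}" for X
    using keys_add[of "E j" X] that j by auto
  show "Poly_Mapping.keys (fst AB) \<subseteq> {..n} \<and> Poly_Mapping.keys (snd AB) \<subseteq> {..n} \<and>
       mdeg (fst AB) = Suc l \<and> mdeg (snd AB) = Suc l"
    using AB k b mdeg_add[of "E j"] mdeg_E[of j] by simp
qed

lemma Pkl_Alg: "g \<in> Pkl n l l \<Longrightarrow> g \<in> Alg n"
  by (auto simp: Pkl_def Alg_def)

lemma I_smul: "x \<in> star_ideal n hb S \<Longrightarrow> Poly_Mapping.single 0 c * x \<in> star_ideal n hb S"
  using star_ideal.scale[of x n hb S c] by (simp add: pscale_eq)

lemma I_diff:
  assumes "x \<in> star_ideal n hb S" "y \<in> star_ideal n hb S"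
  shows "x - y \<in> star_ideal n hb S"
proof -
  have "x + Poly_Mapping.single 0 (-1) * y \<in> star_ideal n hb S"
    by (intro star_ideal.add I_smul assms)
  then show ?thesis by (simp add: single_uminus)
qed

lemma main:
  assumes hb: "hb > 0"
  shows "\<forall>l g. g \<in> Pkl n l l \<longrightarrow> Jpoly n ^ k * g -
     Poly_Mapping.single 0 (complex_of_real (hb ^ k * ffall (\<mu> / hb - real l) k)) * g
      \<in> star_ideal n hb {Jpoly n - pscale (complex_of_real \<mu>) 1}"
proof (induction k)
  case 0
  then show ?case by (simp add: ffall_def star_ideal.zero)
next
  case (Suc k)
  show ?case
  proof (intro allI impI)
    fix l g assume g: "g \<in> Pkl n l l"
    let ?I = "star_ideal n hb {Jpoly n - pscale (complex_of_real \<mu>) 1}"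
    let ?J = "Jpoly n"
    have "wick hb (?J - pscale (complex_of_real \<mu>) 1) g \<in> ?I"
      by (intro star_ideal.right star_ideal.gen Pkl_Alg[OF g]) simp
    then have b: "?J * g - Poly_Mapping.single 0 (complex_of_real (\<mu> - hb * real l)) * g \<in> ?I"
      unfolding wick_f[OF g] by (simp add: pscale_eq algebra_simps single_diff)
    define c where "c = complex_of_real (hb ^ k * ffall (\<mu> / hb - real (Suc l)) k)"
    have ih: "?J ^ k * (?J * g) - Poly_Mapping.single 0 c * (?J * g) \<in> ?I"
      using Suc.IH Pkl_J[OF g] unfolding c_def by blast
    have m1: "?J ^ k * (?J * g) - Poly_Mapping.single 0 c * (?J * g) +
       Poly_Mapping.single 0 c * (?J * g - Poly_Mapping.single 0 (complex_of_real (\<mu> - hb * real l)) * g) \<in> ?I"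
      by (intro star_ideal.add ih I_smul b)
    have m2: "?J ^ k * (?J * g) - Poly_Mapping.single 0 c * (?J * g) +
       Poly_Mapping.single 0 c * (?J * g - Poly_Mapping.single 0 (complex_of_real (\<mu> - hb * real l)) * g)
       = ?J ^ Suc k * g - Poly_Mapping.single 0 (c * complex_of_real (\<mu> - hb * real l)) * g"
      by (simp add: algebra_simps mult_single del: single_of_nat)
    have m3: "c * complex_of_real (\<mu> - hb * real l) =
        complex_of_real (hb ^ Suc k * ffall (\<mu> / hb - real l) (Suc k))"
    proof -
      have a: "\<mu> / hb - real l - 1 = \<mu> / hb - real (Suc l)" by simp
      have e: "hb ^ k * ffall (\<mu> / hb - real (Suc l)) k * (\<mu> - hb * real l) =
          hb ^ Suc k * ffall (\<mu> / hb - real l) (Suc k)"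
        unfolding ffall_Suc a using hb by (simp add: field_simps)
      show ?thesis unfolding c_def by (metis e of_real_mult)
    qed
    show "?J ^ Suc k * g - Poly_Mapping.single 0
        (complex_of_real (hb ^ Suc k * ffall (\<mu> / hb - real l) (Suc k))) * g \<in> ?I"
      using m1 unfolding m2 m3 .
  qed
qed

theorem lemma4p9:
  fixes n k l :: nat and hb \<mu> :: real and g :: cpoly
  assumes "n \<ge> 1" and "hb > 0" and "g \<in> Pkl n l l"
  shows "Jpoly n ^ k * g - pscale (complex_of_real (hb ^ k * ffall (\<mu> / hb - real l) k)) g
           \<in> star_ideal n hb {Jpoly n - pscale (complex_of_real \<mu>) 1}"
  using main[OF assms(2), of n k \<mu>] assms(3) unfolding pscale_eq by blast

end
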